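(* Let $\Gamma$ be a connected $3$-plane drawing. Then \[ 2|E_2|+4|E_3| \;\ge\; 3N(A_3)+N(B_4)+4N(A_4)+2N(B_5)+5N(A_5)+\tau(B_4,L)+\tau(B_5,L)+\tau(A_3,L)+\tau(A_5,L). \]
   Context: Drawings are on the sphere: vertices are distinct points, edges (of a graph possibly with parallel edges, no loops) are Jordan arcs; any two edges share finitely many points, each a common endpoint or a proper crossing; no three edges cross at one point; no edge crosses itself; adjacent edges do not cross. A drawing is $3$-plane if every edge is crossed at most three times. For $i\in\{0,1,2,3\}$, $E_i$ is the set of edges with exactly $i$ crossings. An edge with $i$ crossings is split into $i+1$ edge-segments; an edge-segment is inner if both its endpoints are crossings and outer otherwise. The planarization replaces each crossing by a degree-$4$ vertex; the drawing is connected if its planarization is connected. Cells are the components of the sphere minus all vertices and edges; the boundary of a cell is a cyclic sequence alternating between edge-segments and vertices/crossings. The size of a cell is the number of vertex incidences plus edge-segment incidences along its boundary (crossings not counted). Cell types: $A_3$: three crossings and three inner edge-segments, no vertex. $A_4$: four crossings and four inner edge-segments. $B_4$: boundary $v$, outer segment, crossing, inner segment, crossing, outer segment. $B_5$: boundary $v$, outer segment, crossing, inner segment, crossing, inner segment, crossing, outer segment. $A_5$: five crossings and five inner segments. $L$: any cell of size at least $6$. $N(T)$ is the number of cells of type $T$. Trails: a trail is a sequence $(c_1,\dots,c_\ell)$, $\ell\ge 2$, of cells such that (1) neither $c_1$ nor $c_\ell$ is of type $A_4$; (2) consecutive cells share an inner edge-segment; (3) each of $c_2,\dots,c_{\ell-1}$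 is an $A_4$-cell whose two edge-segments shared with its neighbours are opposite on its boundary. A trail and its reversal are the same trail. $\tau(T,T')$ is the number of trails whose end cells are of types $T$ and $T'$. *)

theory Defs
  imports Main "HOL-Combinatorics.Permutations"
begin

text \<open>
  Combinatorial encoding of a connected drawing on the sphere through its
  planarization, given as a combinatorial map (rotation system):
  \<^item> D      : finite set of darts (half edge-segments of the planarization);
  \<^item> al     : fixed-point-free involution on D pairing the two darts of an edge-segment;
  \<^item> sg     : permutation of D giving the cyclic rotation of darts around each node;
  \<^item> C      : the darts located at crossings (a union of sg-orbits); the remaining
             nodes of the planarization are the vertices of the drawing.
  At a crossing (a node of degree 4), an edge passes from a dart d to the opposite
  dart sg (sg d).
\<close>

definition node :: "('d \<Rightarrow> 'd) \<Rightarrow> 'd \<Rightarrow> 'd set" where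
  "node sg d = {(sg ^^ n) d | n. True}"

definition phi :: "('d \<Rightarrow> 'd) \<Rightarrow> ('d \<Rightarrow> 'd) \<Rightarrow> 'd \<Rightarrow> 'd" where
  "phi al sg = sg \<circ> al"

definition cell :: "('d \<Rightarrow> 'd) \<Rightarrow> ('d \<Rightarrow> 'd) \<Rightarrow> 'd \<Rightarrow> 'd set" where
  "cell al sg d = {(phi al sg ^^ n) d | n. True}"

definition cells :: "'d set \<Rightarrow> ('d \<Rightarrow> 'd) \<Rightarrow> ('d \<Rightarrow> 'd) \<Rightarrow> 'd set set" where
  "cells D al sg = cell al sg ` D"

definition nodes :: "'d set \<Rightarrow> ('d \<Rightarrow> 'd) \<Rightarrow> 'd set set" where
  "nodes D sg = node sg ` D"

definition edge_rel :: "'d set \<Rightarrow> ('d \<Rightarrow> 'd) \<Rightarrow> ('d \<Rightarrow> 'd) \<Rightarrow> 'd set \<Rightarrow> ('d \<times> 'd) set" where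
  "edge_rel D al sg C = {(x, al x) | x. x \<in> D} \<union> {(x, sg (sg x)) | x. x \<in> C}"

definition edge_of :: "'d set \<Rightarrow> ('d \<Rightarrow> 'd) \<Rightarrow> ('d \<Rightarrow> 'd) \<Rightarrow> 'd set \<Rightarrow> 'd \<Rightarrow> 'd set" where
  "edge_of D al sg C d = {y. (d, y) \<in> (edge_rel D al sg C)\<^sup>*}"

definition edges :: "'d set \<Rightarrow> ('d \<Rightarrow> 'd) \<Rightarrow> ('d \<Rightarrow> 'd) \<Rightarrow> 'd set \<Rightarrow> 'd set set" where
  "edges D al sg C = edge_of D al sg C ` D"

text \<open>An edge with i crossings consists of i+1 edge-segments, i.e. 2(i+1) darts.\<close>
definition E_i :: "'d set \<Rightarrow> ('d \<Rightarrow> 'd) \<Rightarrow> ('d \<Rightarrow> 'd) \<Rightarrow> 'd set \<Rightarrow> nat \<Rightarrow> 'd set set" where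
  "E_i D al sg C i = {e \<in> edges D al sg C. card e = 2 * (i + 1)}"

definition connected_drawing :: "'d set \<Rightarrow> ('d \<Rightarrow> 'd) \<Rightarrow> ('d \<Rightarrow> 'd) \<Rightarrow> 'd set \<Rightarrow> bool" where
  "connected_drawing D al sg C \<longleftrightarrow>
     finite D \<and>
     al permutes D \<and> (\<forall>d\<in>D. al (al d) = d \<and> al d \<noteq> d) \<and>
     sg permutes D \<and>
     C \<subseteq> D \<and> (\<forall>d\<in>C. sg d \<in> C) \<and>
     \<comment> \<open>crossings are nodes of degree exactly 4\<close>
     (\<forall>d\<in>C. (sg ^^ 4) d = d \<and> (sg ^^ 2) d \<noteq> d) \<and>
     \<comment> \<open>planarization connected\<close>
     (\<forall>d\<in>D. \<forall>d'\<in>D. (d, d') \<in> ({(x, al x) | x. x \<in> D} \<union> {(x, sg x) | x. x \<in> D})\<^sup>*) \<and>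
     \<comment> \<open>genus 0 (drawn on the sphere): Euler's formula for the planarization\<close>
     (D \<noteq> {} \<longrightarrow> int (card (nodes D sg)) - int (card D div 2) + int (card (cells D al sg)) = 2) \<and>
     \<comment> \<open>every edge is an arc ending at vertices (no closed curve through crossings only)\<close>
     (\<forall>d\<in>D. \<exists>x\<in>edge_of D al sg C d. x \<notin> C) \<and>
     \<comment> \<open>no loops: the two end darts of an edge are at distinct vertices\<close>
     (\<forall>x\<in>D - C. \<forall>y\<in>D - C. x \<noteq> y \<and> y \<in> edge_of D al sg C x \<longrightarrow> node sg x \<noteq> node sg y) \<and>
     \<comment> \<open>no edge crosses itself\<close>
     (\<forall>d\<in>C. sg d \<notin> edge_of D al sg C d) \<and>
     \<comment> \<open>adjacent edges do not cross\<close>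
     (\<forall>d\<in>C. \<forall>x\<in>edge_of D al sg C d - C. \<forall>y\<in>edge_of D al sg C (sg d) - C.
        node sg x \<noteq> node sg y)"

definition three_plane :: "'d set \<Rightarrow> ('d \<Rightarrow> 'd) \<Rightarrow> ('d \<Rightarrow> 'd) \<Rightarrow> 'd set \<Rightarrow> bool" where
  "three_plane D al sg C \<longleftrightarrow> (\<forall>e\<in>edges D al sg C. card e \<le> 8)"

text \<open>size of a cell: edge-segment incidences (= length of the boundary walk)
  plus vertex incidences (boundary darts not at a crossing)\<close>
definition cell_size :: "'d set \<Rightarrow> 'd set \<Rightarrow> nat" where
  "cell_size C f = card f + card (f - C)"

definition is_A3 :: "'d set \<Rightarrow> 'd set \<Rightarrow> bool" where
  "is_A3 C f \<longleftrightarrow> card f = 3 \<and> f \<subseteq> C"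
definition is_A4 :: "'d set \<Rightarrow> 'd set \<Rightarrow> bool" where
  "is_A4 C f \<longleftrightarrow> card f = 4 \<and> f \<subseteq> C"
definition is_A5 :: "'d set \<Rightarrow> 'd set \<Rightarrow> bool" where
  "is_A5 C f \<longleftrightarrow> card f = 5 \<and> f \<subseteq> C"
definition is_B4 :: "'d set \<Rightarrow> 'd set \<Rightarrow> bool" where
  "is_B4 C f \<longleftrightarrow> card f = 3 \<and> card (f - C) = 1"
definition is_B5 :: "'d set \<Rightarrow> 'd set \<Rightarrow> bool" where
  "is_B5 C f \<longleftrightarrow> card f = 4 \<and> card (f - C) = 1"
definition is_L :: "'d set \<Rightarrow> 'd set \<Rightarrow> bool" where
  "is_L C f \<longleftrightarrow> cell_size C f \<ge> 6"

definition N :: "'d set \<Rightarrow> ('d \<Rightarrow> 'd) \<Rightarrow> ('d \<Rightarrow> 'd) \<Rightarrow> ('d set \<Rightarrow> bool) \<Rightarrow> nat" where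
  "N D al sg T = card {f \<in> cells D al sg. T f}"

text \<open>Trails: a sequence of cells; ds!i is a dart on the boundary of cs!i whose
  segment (an inner segment) is shared with cs!(i+1), al (ds!i) lying on cs!(i+1).
  In an interior A4-cell the leaving segment is opposite to the entering one.\<close>
definition is_trail :: "'d set \<Rightarrow> ('d \<Rightarrow> 'd) \<Rightarrow> ('d \<Rightarrow> 'd) \<Rightarrow> 'd set \<Rightarrow> 'd set list \<Rightarrow> bool" where
  "is_trail D al sg C cs \<longleftrightarrow>
     length cs \<ge> 2 \<and> set cs \<subseteq> cells D al sg \<and>
     \<not> is_A4 C (hd cs) \<and> \<not> is_A4 C (last cs) \<and>
     (\<exists>ds. length ds = length cs - 1 \<and>
        (\<forall>i < length ds. ds ! i \<in> cs ! i \<and> al (ds ! i) \<in> cs ! (Suc i) \<and>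
                         ds ! i \<in> C \<and> al (ds ! i) \<in> C) \<and>
        (\<forall>i. 0 < i \<and> i < length cs - 1 \<longrightarrow>
              is_A4 C (cs ! i) \<and> ds ! i = (phi al sg ^^ 2) (al (ds ! (i - 1)))))"

text \<open>number of trails (a trail identified with its reversal) with end cells of
  types T and T'\<close>
definition tau :: "'d set \<Rightarrow> ('d \<Rightarrow> 'd) \<Rightarrow> ('d \<Rightarrow> 'd) \<Rightarrow> 'd set \<Rightarrow>
                   ('d set \<Rightarrow> bool) \<Rightarrow> ('d set \<Rightarrow> bool) \<Rightarrow> nat" where
  "tau D al sg C T T' = card ((\<lambda>cs. {cs, rev cs}) `
      {cs. is_trail D al sg C cs \<and>
           ((T (hd cs) \<and> T' (last cs)) \<or> (T' (hd cs) \<and> T (last cs)))})"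

end

theory Submission
  imports Defs "HOL-Combinatorics.Orbits"
begin


context
  fixes D :: "'d set" and al sg :: "'d \<Rightarrow> 'd" and C :: "'d set"
  assumes cd: "connected_drawing D al sg C"
begin

lemma finD: "finite D" using cd by (simp add: connected_drawing_def)
lemma alp: "al permutes D" using cd by (simp add: connected_drawing_def)
lemma sgp: "sg permutes D" using cd by (simp add: connected_drawing_def)
lemma al_inv: "d \<in> D \<Longrightarrow> al (al d) = d" using cd by (simp add: connected_drawing_def)
lemma al_ne: "d \<in> D \<Longrightarrow> al d \<noteq> d" using cd by (simp add: connected_drawing_def)
lemma CD: "C \<subseteq> D" using cd by (simp add: connected_drawing_def)
lemma sgC: "d \<in> C \<Longrightarrow> sg d \<in> C" using cd by (simp add: connected_drawing_def)
lemma sg4: "d \<in> C \<Longrightarrow> (sg ^^ 4) d = d" using cd by (simp add: connected_drawing_def)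
lemma sg2: "d \<in> C \<Longrightarrow> (sg ^^ 2) d \<noteq> d" using cd by (simp add: connected_drawing_def)
lemma edge_ax: "d \<in> D \<Longrightarrow> \<exists>x\<in>edge_of D al sg C d. x \<notin> C"
  using cd by (simp add: connected_drawing_def)

lemma alD: "d \<in> D \<Longrightarrow> al d \<in> D" using alp by (simp add: permutes_in_image)
lemma sgD: "d \<in> D \<Longrightarrow> sg d \<in> D" using sgp by (simp add: permutes_in_image)

lemma phip: "phi al sg permutes D"
  unfolding phi_def by (rule permutes_compose[OF alp sgp])

lemma phi_perm: "permutation (phi al sg)"
  using phip finD permutation_permutes by blast

lemma cell_orbit: "cell al sg d = orbit (phi al sg) d"
  unfolding cell_def using orbit_altdef_permutation[OF phi_perm] by simp

lemma self_in_cell: "d \<in> cell al sg d"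
  unfolding cell_def by (auto intro: exI[of _ 0])

lemma cell_step: "x \<in> cell al sg d \<Longrightarrow> phi al sg x \<in> cell al sg d"
  unfolding cell_orbit by (rule orbit.step)

lemma cell_sub: "d \<in> D \<Longrightarrow> cell al sg d \<subseteq> D"
  unfolding cell_orbit by (rule permutes_orbit_subset[OF phip])

lemma cell_eq: "x \<in> cell al sg d \<Longrightarrow> cell al sg x = cell al sg d"
  unfolding cell_orbit using cyclic_on_orbit'[OF phi_perm] orbit_cyclic_eq3 by metis

lemma mem_cells: "f \<in> cells D al sg \<Longrightarrow> x \<in> f \<Longrightarrow> f = cell al sg x \<and> x \<in> D"
  unfolding cells_def using cell_eq cell_sub by blast

lemma cells_fin: "f \<in> cells D al sg \<Longrightarrow> finite f"
  unfolding cells_def using cell_sub finD finite_subset by blast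

lemma cell_period: "(phi al sg ^^ card (cell al sg x)) x = x"
proof -
  let ?p = "phi al sg"
  have xin: "x \<in> orbit ?p x" using permutation_self_in_orbit[OF phi_perm] .
  have "orbit ?p x = (\<lambda>n. (?p ^^ n) x) ` {0..<funpow_dist1 ?p x x}"
    by (rule orbit_conv_funpow_dist1[OF xin])
  moreover have "inj_on (\<lambda>n. (?p ^^ n) x) {0..<funpow_dist1 ?p x x}"
    by (rule inj_on_funpow_dist1[OF xin])
  ultimately have "card (orbit ?p x) = funpow_dist1 ?p x x"
    by (simp add: card_image)
  then show ?thesis using funpow_dist1_prop[OF xin] by (simp add: cell_orbit)
qed

lemma A4_period: "f \<in> cells D al sg \<Longrightarrow> card f = 4 \<Longrightarrow> x \<in> f \<Longrightarrow> (phi al sg ^^ 4) x = x"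
  using mem_cells cell_period by metis

end


lemma even_invol:
  assumes "finite A" "\<forall>x\<in>A. f x \<in> A \<and> f x \<noteq> x \<and> f (f x) = x"
  shows "even (card A)"
  using assms
proof (induction "card A" arbitrary: A rule: less_induct)
  case less
  show ?case
  proof (cases "A = {}")
    case True then show ?thesis by simp
  next
    case False
    then obtain x where x: "x \<in> A" by blast
    let ?A = "A - {x, f x}"
    have fx: "f x \<in> A" "f x \<noteq> x" "f (f x) = x" using x less.prems(2) by auto
    have sub: "{x, f x} \<subseteq> A" using x fx by blast
    have c2: "card {x, f x} = 2" using fx by simp
    have c: "card ?A = card A - 2" using card_Diff_subset[OF _ sub] c2 by simp
    have ge: "card A \<ge> 2" using card_mono[OF less.prems(1) sub] c2 by simp
    have cl: "\<forall>y\<in>?A. f y \<in> ?A \<and> f y \<noteq> y \<and> f (f y) = y"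
    proof
      fix y assume y: "y \<in> ?A"
      then have yA: "y \<in> A" "y \<noteq> x" "y \<noteq> f x" by auto
      have fy: "f y \<in> A" "f y \<noteq> y" "f (f y) = y" using yA(1) less.prems(2) by auto
      have "f y \<noteq> x" using fy(3) yA(3) by auto
      moreover have "f y \<noteq> f x" using fy(3) fx(3) yA(2) by metis
      ultimately show "f y \<in> ?A \<and> f y \<noteq> y \<and> f (f y) = y" using fy by simp
    qed
    have lt: "card ?A < card A" using c ge by simp
    have "even (card ?A)"
      using less.hyps[OF lt _ cl] less.prems(1) by simp
    then show ?thesis using c ge by presburger
  qed
qed

definition Inn :: "'d set \<Rightarrow> ('d \<Rightarrow> 'd) \<Rightarrow> 'd set \<Rightarrow> 'd set" where
  "Inn D al C = {d \<in> D. d \<in> C \<and> al d \<in> C}"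

context
  fixes D :: "'d set" and al sg :: "'d \<Rightarrow> 'd" and C :: "'d set"
  assumes cd: "connected_drawing D al sg C"
begin

abbreviation "ER \<equiv> edge_rel D al sg C"
abbreviation "EO \<equiv> edge_of D al sg C"

lemma ER_sym: "sym ER"
proof (rule symI)
  fix a b assume "(a, b) \<in> ER"
  then show "(b, a) \<in> ER"
    unfolding edge_rel_def
  proof (elim UnE)
    assume "(a, b) \<in> {(x, al x) |x. x \<in> D}"
    then show "(b, a) \<in> {(x, al x) |x. x \<in> D} \<union> {(x, sg (sg x)) |x. x \<in> C}"
      using al_inv[OF cd] alD[OF cd] by auto
  next
    assume "(a, b) \<in> {(x, sg (sg x)) |x. x \<in> C}"
    then have "a \<in> C" "b = sg (sg a)" by auto
    moreover have "sg (sg (sg (sg a))) = a" using sg4[OF cd \<open>a \<in> C\<close>]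
      by (simp add: numeral_eq_Suc)
    ultimately show "(b, a) \<in> {(x, al x) |x. x \<in> D} \<union> {(x, sg (sg x)) |x. x \<in> C}"
      using sgC[OF cd] by auto
  qed
qed

lemma EO_self: "d \<in> EO d" unfolding edge_of_def by simp

lemma EO_eq: "x \<in> EO d \<Longrightarrow> EO x = EO d"
proof -
  assume "x \<in> EO d"
  then have dx: "(d, x) \<in> ER\<^sup>*" unfolding edge_of_def by simp
  then have xd: "(x, d) \<in> ER\<^sup>*" using sym_rtrancl[OF ER_sym] by (meson symD)
  show ?thesis unfolding edge_of_def using dx xd
    by (auto intro: rtrancl_trans)
qed

lemma EO_al: "x \<in> EO d \<Longrightarrow> x \<in> D \<Longrightarrow> al x \<in> EO d"
  unfolding edge_of_def edge_rel_def
  by (auto intro: rtrancl_into_rtrancl)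

lemma EO_sg: "x \<in> EO d \<Longrightarrow> x \<in> C \<Longrightarrow> sg (sg x) \<in> EO d"
  unfolding edge_of_def edge_rel_def
  by (auto intro: rtrancl_into_rtrancl)

lemma EO_sub: "d \<in> D \<Longrightarrow> EO d \<subseteq> D"
proof
  fix y assume "d \<in> D" "y \<in> EO d"
  then have "(d, y) \<in> ER\<^sup>*" unfolding edge_of_def by simp
  then show "y \<in> D" using \<open>d \<in> D\<close>
    by (induct rule: rtrancl_induct)
       (auto simp: edge_rel_def alD[OF cd] intro: sgD[OF cd] dest: subsetD[OF CD[OF cd]])
qed

lemma EO_closed: 
  assumes "d \<in> S" "\<And>x. x \<in> S \<Longrightarrow> x \<in> D \<and> al x \<in> S" "\<And>x. x \<in> S \<Longrightarrow> x \<in> C \<Longrightarrow> sg (sg x) \<in> S"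
  shows "EO d \<subseteq> S"
proof
  fix y assume "y \<in> EO d"
  then have "(d, y) \<in> ER\<^sup>*" unfolding edge_of_def by simp
  then show "y \<in> S" using assms
    by (induct rule: rtrancl_induct) (auto simp: edge_rel_def)
qed


lemma edge_bound:
  assumes d: "d \<in> D"
  shows "card (EO d \<inter> (Inn D al C)) \<le> card (EO d) - 4"
proof -
  let ?e = "EO d"
  have eD: "?e \<subseteq> D" using EO_sub d .
  have fe: "finite ?e" using eD finD[OF cd] finite_subset by blast
  show ?thesis
  proof (cases "\<exists>x\<in>?e - C. al x \<notin> C")
    case True
    then obtain x where x: "x \<in> ?e" "x \<notin> C" "al x \<notin> C" by blast
    have xD: "x \<in> D" using x eD by blast
    have "EO x \<subseteq> {x, al x}"
    proof (rule EO_closed)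
      show "x \<in> {x, al x}" by simp
      fix y assume "y \<in> {x, al x}"
      then show "y \<in> D \<and> al y \<in> {x, al x}" using xD alD[OF cd] al_inv[OF cd] by auto
      assume "y \<in> C" then show "sg (sg y) \<in> {x, al x}" using \<open>y \<in> {x, al x}\<close> x by auto
    qed
    moreover have "EO x = ?e" by (rule EO_eq[OF x(1)])
    ultimately have "?e \<subseteq> {x, al x}" by simp
    then have "?e \<inter> (Inn D al C) = {}" using x(2,3) unfolding Inn_def by auto
    then show ?thesis by simp
  next
    case False
    have "\<forall>x\<in>?e. al x \<in> ?e \<and> al x \<noteq> x \<and> al (al x) = x"
    proof
      fix x assume "x \<in> ?e"
      then have "x \<in> D" using eD by blast
      then show "al x \<in> ?e \<and> al x \<noteq> x \<and> al (al x) = x"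
        using EO_al[OF \<open>x \<in> ?e\<close>] al_ne[OF cd] al_inv[OF cd] by simp
    qed
    then have ev1: "even (card ?e)"
      by (rule even_invol[OF fe])
    have ev2: "even (card (?e \<inter> C))"
    proof (rule even_invol[where f = "\<lambda>x. sg (sg x)"])
      show "finite (?e \<inter> C)" using fe by simp
      show "\<forall>x\<in>?e \<inter> C. sg (sg x) \<in> ?e \<inter> C \<and> sg (sg x) \<noteq> x \<and> sg (sg (sg (sg x))) = x"
      proof
        fix x assume x: "x \<in> ?e \<inter> C"
        have a: "sg (sg x) \<in> ?e" using EO_sg x by blast
        have b: "sg (sg x) \<in> C" using sgC[OF cd] x by blast
        have c: "sg (sg x) \<noteq> x" using sg2[OF cd, of x] x by (simp add: numeral_2_eq_2)
        have e: "sg (sg (sg (sg x))) = x" using sg4[OF cd, of x] x by (simp add: numeral_eq_Suc)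
        show "sg (sg x) \<in> ?e \<inter> C \<and> sg (sg x) \<noteq> x \<and> sg (sg (sg (sg x))) = x"
          using a b c e by blast
      qed
    qed
    have ne: "?e - C \<noteq> {}" using edge_ax[OF cd d] by blast
    have "card (?e - C) = card ?e - card (?e \<inter> C)"
      using fe by (simp add: card_Diff_subset_Int)
    moreover have "card (?e \<inter> C) \<le> card ?e" using fe by (simp add: card_mono)
    ultimately have ev3: "even (card (?e - C))" using ev1 ev2 by simp
    have "card (?e - C) \<noteq> 0" using ne fe by simp
    then have c2: "card (?e - C) \<ge> 2"
    proof -
      assume nz: "card (?e - C) \<noteq> 0"
      from ev3 obtain k where k: "card (?e - C) = 2 * k" by (elim evenE)
      with nz show ?thesis by simp
    qed
    have inj: "inj_on al (?e - C)" by (rule inj_on_subset[OF permutes_inj[OF alp[OF cd]] subset_UNIV])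
    have sub1: "al ` (?e - C) \<subseteq> ?e \<inter> C"
    proof
      fix z assume "z \<in> al ` (?e - C)"
      then obtain y where y: "y \<in> ?e" "y \<notin> C" "z = al y" by blast
      have "y \<in> D" using y eD by blast
      show "z \<in> ?e \<inter> C" using y False EO_al[OF y(1) \<open>y \<in> D\<close>] by blast
    qed
    have disj: "(?e - C) \<inter> al ` (?e - C) = {}" using sub1 by blast
    let ?NI = "(?e - C) \<union> al ` (?e - C)"
    have cNI: "card ?NI = 2 * card (?e - C)"
      using card_Un_disjoint[OF _ _ disj] fe card_image[OF inj] by simp
    have NIsub: "?NI \<subseteq> ?e" using sub1 by blast
    have "?e \<inter> (Inn D al C) \<subseteq> ?e - ?NI"
    proof
      fix z assume z: "z \<in> ?e \<inter> (Inn D al C)"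
      then have "z \<in> C" "al z \<in> C" "z \<in> D" unfolding Inn_def by auto
      moreover have "z \<notin> al ` (?e - C)"
      proof
        assume "z \<in> al ` (?e - C)"
        then obtain y where "y \<in> ?e" "y \<notin> C" "z = al y" by blast
        then show False using \<open>al z \<in> C\<close> al_inv[OF cd] eD by auto
      qed
      ultimately show "z \<in> ?e - ?NI" using z by blast
    qed
    then have "card (?e \<inter> (Inn D al C)) \<le> card (?e - ?NI)" using fe by (simp add: card_mono)
    also have "\<dots> = card ?e - card ?NI" using NIsub fe by (simp add: card_Diff_subset finite_subset)
    finally show ?thesis using cNI c2 by simp
  qed
qed

end


context
  fixes D :: "'d set" and al sg :: "'d \<Rightarrow> 'd" and C :: "'d set"
  assumes cd: "connected_drawing D al sg C"
begin

lemma edge_card_even: "d \<in> D \<Longrightarrow> even (card (edge_of D al sg C d))"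
proof -
  assume d: "d \<in> D"
  let ?e = "edge_of D al sg C d"
  have eD: "?e \<subseteq> D" using EO_sub[OF cd d] .
  have fe: "finite ?e" using eD finD[OF cd] finite_subset by blast
  have "\<forall>x\<in>?e. al x \<in> ?e \<and> al x \<noteq> x \<and> al (al x) = x"
  proof
    fix x assume "x \<in> ?e"
    then have "x \<in> D" using eD by blast
    then show "al x \<in> ?e \<and> al x \<noteq> x \<and> al (al x) = x"
      using EO_al[OF cd \<open>x \<in> ?e\<close>] al_ne[OF cd] al_inv[OF cd] by simp
  qed
  then show ?thesis by (rule even_invol[OF fe])
qed

lemma LHS_bound:
  assumes tp: "three_plane D al sg C"
  shows "card (Inn D al C) \<le> 2 * card (E_i D al sg C 2) + 4 * card (E_i D al sg C 3)"
proof -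
  let ?E = "edges D al sg C"
  let ?I = "Inn D al C"
  have fE: "finite ?E" unfolding edges_def using finD[OF cd] by simp
  have "?I = (\<Union>e\<in>?E. e \<inter> ?I)"
  proof
    show "?I \<subseteq> (\<Union>e\<in>?E. e \<inter> ?I)"
    proof
      fix x assume x: "x \<in> ?I"
      then have "x \<in> D" unfolding Inn_def by blast
      then have "edge_of D al sg C x \<in> ?E" unfolding edges_def by blast
      then show "x \<in> (\<Union>e\<in>?E. e \<inter> ?I)" using x EO_self[OF cd] by blast
    qed
  qed blast
  then have s1: "card ?I = card (\<Union>e\<in>?E. e \<inter> ?I)" by (rule arg_cong)
  have s2: "card (\<Union>e\<in>?E. e \<inter> ?I) \<le> (\<Sum>e\<in>?E. card (e \<inter> ?I))" by (rule card_UN_le[OF fE])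
  have s3: "(\<Sum>e\<in>?E. card (e \<inter> ?I)) \<le> (\<Sum>e\<in>?E. (if card e = 6 then 2 else 0) + (if card e = 8 then 4 else 0))"
  proof (rule sum_mono)
    fix e assume e: "e \<in> ?E"
    then obtain d where d: "d \<in> D" "e = edge_of D al sg C d" unfolding edges_def by blast
    have b: "card (e \<inter> ?I) \<le> card e - 4" using edge_bound[OF cd d(1)] d(2) by simp
    have ev: "even (card e)" using edge_card_even d by simp
    have le: "card e \<le> 8" using tp e unfolding three_plane_def by blast
    have "card e - 4 = (if card e = 6 then 2 else 0) + (if card e = 8 then 4 else 0)"
    proof -
      from ev obtain k where k: "card e = 2 * k" by (elim evenE)
      then have "k \<le> 4" using le by simp
      then have "k = 0 \<or> k = 1 \<or> k = 2 \<or> k = 3 \<or> k = 4" by linarith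
      then show ?thesis using k by (elim disjE) simp_all
    qed
    then show "card (e \<inter> ?I) \<le> (if card e = 6 then 2 else 0) + (if card e = 8 then 4 else 0)"
      using b by simp
  qed
  have s4: "(\<Sum>e\<in>?E. (if card e = 6 then 2::nat else 0) + (if card e = 8 then 4 else 0)) = (\<Sum>e\<in>?E. (if card e = 6 then 2 else 0)) + (\<Sum>e\<in>?E. (if card e = 8 then 4 else 0))"
    by (rule sum.distrib)
  have s5: "(\<Sum>e\<in>?E. (if card e = 6 then 2 else 0)) = 2 * card (E_i D al sg C 2)"
  proof -
    have "(\<Sum>e\<in>?E. (if card e = 6 then 2 else 0)) = (\<Sum>e\<in>E_i D al sg C 2. (2::nat))"
      unfolding E_i_def using sum.inter_filter[OF fE, of "\<lambda>_. (2::nat)" "\<lambda>e. card e = 6"] by simp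
    then show ?thesis by simp
  qed
  have s6: "(\<Sum>e\<in>?E. (if card e = 8 then 4 else 0)) = 4 * card (E_i D al sg C 3)"
  proof -
    have "(\<Sum>e\<in>?E. (if card e = 8 then 4 else 0)) = (\<Sum>e\<in>E_i D al sg C 3. (4::nat))"
      unfolding E_i_def using sum.inter_filter[OF fE, of "\<lambda>_. (4::nat)" "\<lambda>e. card e = 8"] by simp
    then show ?thesis by simp
  qed
  show ?thesis using s1 s2 s3 s4 s5 s6 by linarith
qed

lemma cells_weight:
  assumes "\<And>f. f \<in> cells D al sg \<Longrightarrow> T f \<Longrightarrow> w \<le> card (f \<inter> Inn D al C)"
  shows "w * N D al sg T \<le> card {d \<in> Inn D al C. T (cell al sg d)}"
proof -
  let ?F = "{f \<in> cells D al sg. T f}"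
  let ?I = "Inn D al C"
  have fF: "finite ?F" unfolding cells_def using finD[OF cd] by simp
  have eq: "{d \<in> ?I. T (cell al sg d)} = (\<Union>f\<in>?F. f \<inter> ?I)"
  proof
    show "{d \<in> ?I. T (cell al sg d)} \<subseteq> (\<Union>f\<in>?F. f \<inter> ?I)"
    proof
      fix d assume "d \<in> {d \<in> ?I. T (cell al sg d)}"
      then have "d \<in> D" "d \<in> ?I" "T (cell al sg d)" unfolding Inn_def by auto
      then show "d \<in> (\<Union>f\<in>?F. f \<inter> ?I)" using self_in_cell[OF cd, of d]
        unfolding cells_def by blast
    qed
  next
    show "(\<Union>f\<in>?F. f \<inter> ?I) \<subseteq> {d \<in> ?I. T (cell al sg d)}"
    proof
      fix d assume "d \<in> (\<Union>f\<in>?F. f \<inter> ?I)"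
      then obtain f where f: "f \<in> cells D al sg" "T f" "d \<in> f" "d \<in> ?I" by blast
      then have "f = cell al sg d" using mem_cells[OF cd] by blast
      then show "d \<in> {d \<in> ?I. T (cell al sg d)}" using f by simp
    qed
  qed
  have "card (\<Union>f\<in>?F. f \<inter> ?I) = (\<Sum>f\<in>?F. card (f \<inter> ?I))"
  proof (rule card_UN_disjoint[OF fF])
    show "\<forall>f\<in>?F. finite (f \<inter> ?I)" using cells_fin[OF cd] by blast
    show "\<forall>f\<in>?F. \<forall>g\<in>?F. f \<noteq> g \<longrightarrow> f \<inter> ?I \<inter> (g \<inter> ?I) = {}"
      using mem_cells[OF cd] by blast
  qed
  moreover have "(\<Sum>f\<in>?F. w) \<le> (\<Sum>f\<in>?F. card (f \<inter> ?I))"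
    by (rule sum_mono) (use assms in auto)
  ultimately show ?thesis using eq unfolding N_def by (simp add: mult.commute)
qed

lemma inner_iff: "d \<in> D \<Longrightarrow> d \<in> Inn D al C \<longleftrightarrow> d \<in> C \<and> phi al sg d \<in> C"
proof -
  assume d: "d \<in> D"
  have ad: "al d \<in> D" using alD[OF cd d] .
  have "al d \<in> C \<longleftrightarrow> sg (al d) \<in> C"
  proof
    assume "al d \<in> C" then show "sg (al d) \<in> C" using sgC[OF cd] by blast
  next
    assume s: "sg (al d) \<in> C"
    have "sg ((sg ^^ 4) (al d)) = (sg ^^ 4) (sg (al d))" by (simp add: funpow_swap1)
    also have "\<dots> = sg (al d)" using sg4[OF cd s] .
    finally have "(sg ^^ 4) (al d) = al d"
      by (rule injD[OF permutes_inj[OF sgp[OF cd]]])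
    moreover have "(sg ^^ 3) (sg (al d)) \<in> C" using s sgC[OF cd] by (simp add: numeral_eq_Suc)
    moreover have "(sg ^^ 3) (sg (al d)) = (sg ^^ 4) (al d)" by (simp add: numeral_eq_Suc)
    ultimately show "al d \<in> C" by simp
  qed
  then show ?thesis using d unfolding Inn_def phi_def by simp
qed

end


definition tds :: "('d \<Rightarrow> 'd) \<Rightarrow> ('d \<Rightarrow> 'd) \<Rightarrow> 'd set \<Rightarrow> 'd set list \<Rightarrow> 'd list \<Rightarrow> bool" where
  "tds al sg C cs ds \<longleftrightarrow> length ds = length cs - 1 \<and>
        (\<forall>i < length ds. ds ! i \<in> cs ! i \<and> al (ds ! i) \<in> cs ! (Suc i) \<and>
                         ds ! i \<in> C \<and> al (ds ! i) \<in> C) \<and>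
        (\<forall>i. 0 < i \<and> i < length cs - 1 \<longrightarrow>
              is_A4 C (cs ! i) \<and> ds ! i = (phi al sg ^^ 2) (al (ds ! (i - 1))))"

lemma is_trail_iff: "is_trail D al sg C cs \<longleftrightarrow> length cs \<ge> 2 \<and> set cs \<subseteq> cells D al sg \<and>
     \<not> is_A4 C (hd cs) \<and> \<not> is_A4 C (last cs) \<and> (\<exists>ds. tds al sg C cs ds)"
  unfolding is_trail_def tds_def by blast

context
  fixes D :: "'d set" and al sg :: "'d \<Rightarrow> 'd" and C :: "'d set"
  assumes cd: "connected_drawing D al sg C"
begin

lemma A_inner: "f \<in> cells D al sg \<Longrightarrow> f \<subseteq> C \<Longrightarrow> f \<inter> Inn D al C = f"
proof -
  assume f: "f \<in> cells D al sg" "f \<subseteq> C"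
  have "\<forall>d\<in>f. d \<in> Inn D al C"
  proof
    fix d assume d: "d \<in> f"
    then have fc: "f = cell al sg d" "d \<in> D" using mem_cells[OF cd f(1)] by auto
    have "phi al sg d \<in> f" using cell_step[OF cd, of d d] self_in_cell[OF cd, of d] fc by simp
    then show "d \<in> Inn D al C" using inner_iff[OF cd fc(2)] f(2) d by blast
  qed
  then show ?thesis by blast
qed

lemma B_inner:
  assumes f: "f \<in> cells D al sg" and c1: "card (f - C) = 1"
  shows "card f - 2 \<le> card (f \<inter> Inn D al C)"
proof -
  have ff: "finite f" using cells_fin[OF cd f] .
  obtain v where v: "f - C = {v}" using c1 by (rule card_1_singletonE)
  let ?X = "(f \<inter> C) - Inn D al C"
  have X1: "card ?X \<le> Suc 0"
  proof (subst card_le_Suc0_iff_eq)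
    show "finite ?X" using ff by simp
    show "\<forall>x\<in>?X. \<forall>y\<in>?X. x = y"
    proof (intro ballI)
      fix x y assume x: "x \<in> ?X" and y: "y \<in> ?X"
      have "\<And>z. z \<in> ?X \<Longrightarrow> phi al sg z = v"
      proof -
        fix z assume z: "z \<in> ?X"
        then have zf: "z \<in> f" by blast
        then have fc: "f = cell al sg z" "z \<in> D" using mem_cells[OF cd f] by auto
        have pf: "phi al sg z \<in> f" using cell_step[OF cd, of z z] self_in_cell[OF cd, of z] fc by simp
        have "phi al sg z \<notin> C" using inner_iff[OF cd fc(2)] z by blast
        then show "phi al sg z = v" using pf v by blast
      qed
      then have "phi al sg x = phi al sg y" using x y by simp
      then show "x = y" by (rule injD[OF permutes_inj[OF phip[OF cd]]])
    qed
  qed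
  have "f \<inter> C \<subseteq> ?X \<union> (f \<inter> Inn D al C)" by blast
  then have "card (f \<inter> C) \<le> card (?X \<union> (f \<inter> Inn D al C))" using ff by (intro card_mono) auto
  also have "\<dots> \<le> card ?X + card (f \<inter> Inn D al C)" by (rule card_Un_le)
  finally have a: "card (f \<inter> C) \<le> Suc 0 + card (f \<inter> Inn D al C)" using X1 by linarith
  have "card (f - C) = card f - card (f \<inter> C)" using ff by (simp add: card_Diff_subset_Int)
  moreover have "card (f \<inter> C) \<le> card f" using ff by (simp add: card_mono)
  ultimately show ?thesis using a c1 by linarith
qed

lemma tds_facts:
  assumes t: "is_trail D al sg C cs" and d: "tds al sg C cs ds"
  shows "length cs \<ge> 2" "length ds = length cs - 1" "cs ! 0 = cell al sg (ds ! 0)"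
    "\<And>i. i < length ds \<Longrightarrow> cs ! (Suc i) = cell al sg (al (ds ! i))"
    "\<And>i. i < length ds \<Longrightarrow> ds ! i \<in> D"
    "\<And>i. i < length cs \<Longrightarrow> cs ! i \<in> cells D al sg"
proof -
  show l2: "length cs \<ge> 2" using t unfolding is_trail_iff by blast
  show ld: "length ds = length cs - 1" using d unfolding tds_def by blast
  show ci: "\<And>i. i < length cs \<Longrightarrow> cs ! i \<in> cells D al sg"
    using t unfolding is_trail_iff using nth_mem by blast
  show "cs ! 0 = cell al sg (ds ! 0)"
  proof -
    have a: "ds ! 0 \<in> cs ! 0" using d l2 ld unfolding tds_def by auto
    have c0: "cs ! 0 \<in> cells D al sg" using ci[of 0] l2 by force
    show ?thesis using mem_cells[OF cd c0 a] by blast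
  qed
  fix i assume i: "i < length ds"
  have "al (ds ! i) \<in> cs ! Suc i" using d i unfolding tds_def by blast
  moreover have c1: "cs ! Suc i \<in> cells D al sg" using ci i ld by simp
  ultimately show "cs ! (Suc i) = cell al sg (al (ds ! i))" using mem_cells[OF cd] by blast
  have "ds ! i \<in> cs ! i" using d i unfolding tds_def by blast
  moreover have c2: "cs ! i \<in> cells D al sg" using ci i ld by simp
  ultimately show "ds ! i \<in> D" using mem_cells[OF cd] by blast
qed

lemma trail_len_le:
  assumes t: "is_trail D al sg C cs" and d: "tds al sg C cs ds"
    and t': "is_trail D al sg C cs'" and d': "tds al sg C cs' ds'"
    and h: "ds ! 0 = ds' ! 0"
  shows "length cs \<le> length cs'" "\<And>i. i < length cs - 1 \<Longrightarrow> i < length cs' - 1 \<Longrightarrow> ds ! i = ds' ! i"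
proof -
  note f = tds_facts[OF t d] and f' = tds_facts[OF t' d']
  show agree: "\<And>i. i < length cs - 1 \<Longrightarrow> i < length cs' - 1 \<Longrightarrow> ds ! i = ds' ! i"
  proof -
    fix i show "i < length cs - 1 \<Longrightarrow> i < length cs' - 1 \<Longrightarrow> ds ! i = ds' ! i"
    proof (induction i)
      case 0 then show ?case using h by simp
    next
      case (Suc i)
      have "ds ! Suc i = (phi al sg ^^ 2) (al (ds ! i))" using d Suc.prems unfolding tds_def by auto
      moreover have "ds' ! Suc i = (phi al sg ^^ 2) (al (ds' ! i))" using d' Suc.prems unfolding tds_def by auto
      ultimately show ?case using Suc by simp
    qed
  qed
  show "length cs \<le> length cs'"
  proof (rule ccontr)
    assume "\<not> length cs \<le> length cs'"
    let ?k = "length cs' - 1"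
    have k: "0 < ?k" "?k < length cs - 1" using f'(1) \<open>\<not> length cs \<le> length cs'\<close> by auto
    then obtain j where j: "?k = Suc j" by (cases ?k) auto
    have "cs ! ?k = cell al sg (al (ds ! j))"
      using f(4)[of j] k f(2) j by simp
    also have "\<dots> = cell al sg (al (ds' ! j))" using agree[of j] k j by simp
    also have "\<dots> = cs' ! ?k" using f'(4)[of j] k f'(2) j by simp
    also have "\<dots> = last cs'" using f'(1) by (subst last_conv_nth) auto
    finally have "cs ! ?k = last cs'" .
    moreover have "is_A4 C (cs ! ?k)" using d k unfolding tds_def by blast
    moreover have "\<not> is_A4 C (last cs')" using t' unfolding is_trail_iff by blast
    ultimately show False by simp
  qed
qed

lemma trail_fwd:
  assumes t: "is_trail D al sg C cs" and d: "tds al sg C cs ds"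
    and t': "is_trail D al sg C cs'" and d': "tds al sg C cs' ds'"
    and h: "ds ! 0 = ds' ! 0"
  shows "cs = cs'"
proof -
  note f = tds_facts[OF t d] and f' = tds_facts[OF t' d']
  have l: "length cs = length cs'"
    using trail_len_le(1)[OF t d t' d' h] trail_len_le(1)[OF t' d' t d h[symmetric]] by simp
  note agree = trail_len_le(2)[OF t d t' d' h]
  show ?thesis
  proof (rule nth_equalityI[OF l])
    fix i assume i: "i < length cs"
    show "cs ! i = cs' ! i"
    proof (cases i)
      case 0 then show ?thesis using f(3) f'(3) h by simp
    next
      case (Suc j)
      then have "j < length ds" "j < length ds'" using i f(2) f'(2) l by auto
      then show ?thesis using f(4)[of j] f'(4)[of j] agree[of j] Suc f(2) f'(2) l by simp
    qed
  qed
qed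

end


context
  fixes D :: "'d set" and al sg :: "'d \<Rightarrow> 'd" and C :: "'d set"
  assumes cd: "connected_drawing D al sg C"
begin

lemma trail_rev:
  assumes t: "is_trail D al sg C cs" and d: "tds al sg C cs ds"
  shows "is_trail D al sg C (rev cs)" "tds al sg C (rev cs) (rev (map al ds))"
proof -
  note f = tds_facts[OF cd t d]
  let ?k = "length ds"
  let ?r = "rev (map al ds)"
  have lk: "length cs = Suc ?k" using f(1,2) by simp
  have ne: "cs \<noteq> []" using f(1) by auto
  have dsD: "\<And>i. i < ?k \<Longrightarrow> al (al (ds ! i)) = ds ! i" using f(5) al_inv[OF cd] by blast
  have r_nth: "\<And>i. i < ?k \<Longrightarrow> ?r ! i = al (ds ! (?k - 1 - i))"
    by (simp add: rev_nth)
  have rc_nth: "\<And>i. i < length cs \<Longrightarrow> rev cs ! i = cs ! (?k - i)"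
    using lk by (simp add: rev_nth)
  have c1: "\<forall>i < length ?r. ?r ! i \<in> rev cs ! i \<and> al (?r ! i) \<in> rev cs ! (Suc i) \<and>
                         ?r ! i \<in> C \<and> al (?r ! i) \<in> C"
  proof (intro allI impI)
    fix i assume i: "i < length ?r"
    then have i': "i < ?k" by simp
    let ?j = "?k - 1 - i"
    have j: "?j < ?k" "Suc ?j = ?k - i" "?k - Suc i = ?j" using i' by auto
    have o: "ds ! ?j \<in> cs ! ?j \<and> al (ds ! ?j) \<in> cs ! (Suc ?j) \<and> ds ! ?j \<in> C \<and> al (ds ! ?j) \<in> C"
      using d j(1) unfolding tds_def by blast
    show "?r ! i \<in> rev cs ! i \<and> al (?r ! i) \<in> rev cs ! (Suc i) \<and> ?r ! i \<in> C \<and> al (?r ! i) \<in> C"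
    proof -
      have e1: "?r ! i = al (ds ! ?j)" using r_nth[OF i'] .
      have e2: "rev cs ! i = cs ! Suc ?j" unfolding j(2) by (rule rc_nth) (use lk i' in simp)
      have e3: "rev cs ! Suc i = cs ! ?j" unfolding j(3)[symmetric] by (rule rc_nth) (use lk i' in simp)
      have e4: "al (?r ! i) = ds ! ?j" using e1 dsD[OF j(1)] by simp
      show ?thesis unfolding e2 e3 e1 dsD[OF j(1)] using o by blast
    qed
  qed
  have c2: "\<forall>i. 0 < i \<and> i < length (rev cs) - 1 \<longrightarrow>
              is_A4 C (rev cs ! i) \<and> ?r ! i = (phi al sg ^^ 2) (al (?r ! (i - 1)))"
  proof (intro allI impI)
    fix i assume "0 < i \<and> i < length (rev cs) - 1"
    then have i: "0 < i" "i < ?k" using lk by auto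
    let ?j = "?k - i"
    have j: "0 < ?j" "?j < length cs - 1" "?j < ?k" using i lk by auto
    have o: "is_A4 C (cs ! ?j) \<and> ds ! ?j = (phi al sg ^^ 2) (al (ds ! (?j - 1)))"
      using d j unfolding tds_def by blast
    have a4: "is_A4 C (rev cs ! i)" using o rc_nth[of i] i lk by simp
    have x: "al (ds ! (?j - 1)) \<in> cs ! ?j"
    proof -
      have "?j - 1 < ?k" using j by simp
      then have "al (ds ! (?j - 1)) \<in> cs ! Suc (?j - 1)" using d unfolding tds_def by blast
      moreover have "Suc (?j - 1) = ?j" using j(1) by simp
      ultimately show ?thesis by simp
    qed
    have cj: "cs ! ?j \<in> cells D al sg" using f(6) j lk by simp
    have p4: "(phi al sg ^^ 4) (al (ds ! (?j - 1))) = al (ds ! (?j - 1))"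
      using A4_period[OF cd cj _ x] o unfolding is_A4_def by blast
    have "(phi al sg ^^ 2) (al (?r ! (i - 1))) = (phi al sg ^^ 2) (ds ! ?j)"
    proof -
      have "?r ! (i - 1) = al (ds ! (?k - 1 - (i - 1)))" using r_nth[of "i - 1"] i by simp
      moreover have "?k - 1 - (i - 1) = ?j" using i by simp
      ultimately show ?thesis using dsD[OF j(3)] by simp
    qed
    also have "\<dots> = (phi al sg ^^ 2) ((phi al sg ^^ 2) (al (ds ! (?j - 1))))"
      by (subst conjunct2[OF o]) (rule refl)
    also have "\<dots> = (phi al sg ^^ 4) (al (ds ! (?j - 1)))"
    proof -
      have "(phi al sg ^^ 4) = (phi al sg ^^ 2) \<circ> (phi al sg ^^ 2)"
        using funpow_add[of 2 2 "phi al sg"] by simp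
      then show ?thesis by simp
    qed
    also have "\<dots> = al (ds ! (?j - 1))" by (rule p4)
    also have "\<dots> = ?r ! i"
    proof -
      have "?k - 1 - i = ?j - 1" using i by simp
      then show ?thesis using r_nth[of i] i by simp
    qed
    finally show "is_A4 C (rev cs ! i) \<and> ?r ! i = (phi al sg ^^ 2) (al (?r ! (i - 1)))"
      using a4 by simp
  qed
  show td: "tds al sg C (rev cs) ?r"
    unfolding tds_def by (intro conjI c1 c2) (simp add: f(2))
  show "is_trail D al sg C (rev cs)"
  proof -
    have tt: "length cs \<ge> 2" "set cs \<subseteq> cells D al sg" "\<not> is_A4 C (hd cs)" "\<not> is_A4 C (last cs)"
      using t unfolding is_trail_iff by blast+
    show ?thesis unfolding is_trail_iff
    proof (intro conjI exI[of _ ?r])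
      show "2 \<le> length (rev cs)" using tt by simp
      show "set (rev cs) \<subseteq> cells D al sg" using tt by simp
      show "\<not> is_A4 C (hd (rev cs))" using tt ne by (simp add: hd_rev)
      show "\<not> is_A4 C (last (rev cs))" using tt ne by (simp add: last_rev)
      show "tds al sg C (rev cs) ?r" by (rule td)
    qed
  qed
qed

end


definition dsof :: "('d \<Rightarrow> 'd) \<Rightarrow> ('d \<Rightarrow> 'd) \<Rightarrow> 'd set \<Rightarrow> 'd set list \<Rightarrow> 'd list" where
  "dsof al sg C cs = (SOME ds. tds al sg C cs ds)"

definition Fend :: "('d \<Rightarrow> 'd) \<Rightarrow> ('d \<Rightarrow> 'd) \<Rightarrow> 'd set \<Rightarrow> 'd set list \<Rightarrow> 'd" where
  "Fend al sg C cs = (if is_L C (last cs) then al (last (dsof al sg C cs)) else hd (dsof al sg C cs))"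

definition SL :: "'d set \<Rightarrow> ('d \<Rightarrow> 'd) \<Rightarrow> ('d \<Rightarrow> 'd) \<Rightarrow> 'd set \<Rightarrow> ('d set \<Rightarrow> bool) \<Rightarrow> 'd set" where
  "SL D al sg C T = {d \<in> Inn D al C. T (cell al sg d)}"

context
  fixes D :: "'d set" and al sg :: "'d \<Rightarrow> 'd" and C :: "'d set"
  assumes cd: "connected_drawing D al sg C"
begin

lemma dsof_tds: "is_trail D al sg C cs \<Longrightarrow> tds al sg C cs (dsof al sg C cs)"
  unfolding dsof_def is_trail_iff by (metis someI_ex)

lemma ds_ne: "is_trail D al sg C cs \<Longrightarrow> tds al sg C cs ds \<Longrightarrow> ds \<noteq> []"
  using tds_facts(1,2)[OF cd] by fastforce

lemma hd_rev_ds: "ds \<noteq> [] \<Longrightarrow> rev (map al ds) ! 0 = al (last ds)"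
  by (simp add: rev_nth last_conv_nth)

lemma Fend_inj:
  assumes t: "is_trail D al sg C cs" and t': "is_trail D al sg C cs'"
    and h: "Fend al sg C cs = Fend al sg C cs'"
  shows "cs' = cs \<or> cs' = rev cs"
proof -
  let ?ds = "dsof al sg C cs" and ?ds' = "dsof al sg C cs'"
  have d: "tds al sg C cs ?ds" and d': "tds al sg C cs' ?ds'" using dsof_tds t t' by auto
  have ne: "?ds \<noteq> []" and ne': "?ds' \<noteq> []" using ds_ne t t' d d' by auto
  note r = trail_rev[OF cd t d] and r' = trail_rev[OF cd t' d']
  have hd0: "hd ?ds = ?ds ! 0" "hd ?ds' = ?ds' ! 0" using ne ne' by (simp_all add: hd_conv_nth)
  show ?thesis
  proof (cases "is_L C (last cs)")
    case True
    note T = True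
    show ?thesis
    proof (cases "is_L C (last cs')")
      case True
      then have "al (last ?ds) = al (last ?ds')" using h T unfolding Fend_def by simp
      then have "rev (map al ?ds) ! 0 = rev (map al ?ds') ! 0" using hd_rev_ds ne ne' by simp
      then have "rev cs = rev cs'" by (rule trail_fwd[OF cd r(1) r(2) r'(1) r'(2)])
      then show ?thesis by simp
    next
      case False
      then have "al (last ?ds) = ?ds' ! 0" using h T hd0 unfolding Fend_def by simp
      then have "rev (map al ?ds) ! 0 = ?ds' ! 0" using hd_rev_ds ne by simp
      then have "rev cs = cs'" by (rule trail_fwd[OF cd r(1) r(2) t' d'])
      then show ?thesis by simp
    qed
  next
    case False
    note F = False
    show ?thesis
    proof (cases "is_L C (last cs')")
      case True
      then have "?ds ! 0 = al (last ?ds')" using h F hd0 unfolding Fend_def by simp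
      then have "?ds ! 0 = rev (map al ?ds') ! 0" using hd_rev_ds ne' by simp
      then have "cs = rev cs'" by (rule trail_fwd[OF cd t d r'(1) r'(2)])
      then show ?thesis by simp
    next
      case False
      then have "?ds ! 0 = ?ds' ! 0" using h F hd0 unfolding Fend_def by simp
      then have "cs = cs'" by (rule trail_fwd[OF cd t d t' d'])
      then show ?thesis by simp
    qed
  qed
qed

lemma Fend_in:
  assumes t: "is_trail D al sg C cs" and L: "is_L C (last cs) \<or> is_L C (hd cs)"
  shows "Fend al sg C cs \<in> SL D al sg C (is_L C)"
proof -
  let ?ds = "dsof al sg C cs"
  have d: "tds al sg C cs ?ds" using dsof_tds t by auto
  note f = tds_facts[OF cd t d]
  have ne: "?ds \<noteq> []" using ds_ne t d by auto
  show ?thesis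
  proof (cases "is_L C (last cs)")
    case True
    let ?m = "length ?ds - 1"
    have m: "?m < length ?ds" using ne by simp
    have lastd: "last ?ds = ?ds ! ?m" using ne by (simp add: last_conv_nth)
    have y: "Fend al sg C cs = al (?ds ! ?m)" using True lastd unfolding Fend_def by simp
    have inC: "?ds ! ?m \<in> C" "al (?ds ! ?m) \<in> C" using d m unfolding tds_def by blast+
    have inD: "?ds ! ?m \<in> D" using f(5) m by blast
    have cellc: "cs ! Suc ?m = cell al sg (al (?ds ! ?m))" using f(4) m by blast
    have "Suc ?m = length cs - 1" using f(1,2) ne by simp
    moreover have "cs \<noteq> []" using f(1) by auto
    ultimately have "cs ! Suc ?m = last cs" by (simp add: last_conv_nth)
    then have "is_L C (cell al sg (al (?ds ! ?m)))" using cellc True by simp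
    moreover have "al (?ds ! ?m) \<in> Inn D al C"
      unfolding Inn_def using inC inD alD[OF cd] al_inv[OF cd] by simp
    ultimately show ?thesis using y unfolding SL_def by simp
  next
    case False
    then have Lh: "is_L C (hd cs)" using L by simp
    have y: "Fend al sg C cs = ?ds ! 0" using False ne unfolding Fend_def by (simp add: hd_conv_nth)
    have z: "0 < length ?ds" using ne by simp
    have inC: "?ds ! 0 \<in> C" "al (?ds ! 0) \<in> C" using d z unfolding tds_def by blast+
    have inD: "?ds ! 0 \<in> D" using f(5) z by blast
    have "cs \<noteq> []" using f(1) by auto
    then have "hd cs = cs ! 0" by (simp add: hd_conv_nth)
    then have "is_L C (cell al sg (?ds ! 0))" using Lh f(3) by simp
    moreover have "?ds ! 0 \<in> Inn D al C" unfolding Inn_def using inC inD by simp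
    ultimately show ?thesis using y unfolding SL_def by simp
  qed
qed

end


definition TX :: "'d set \<Rightarrow> ('d \<Rightarrow> 'd) \<Rightarrow> ('d \<Rightarrow> 'd) \<Rightarrow> 'd set \<Rightarrow> ('d set \<Rightarrow> bool) \<Rightarrow> 'd set list set" where
  "TX D al sg C X = {cs. is_trail D al sg C cs \<and>
           ((X (hd cs) \<and> is_L C (last cs)) \<or> (is_L C (hd cs) \<and> X (last cs)))}"

lemma excl:
  "\<not> (is_A3 C f \<and> is_B4 C f)" "\<not> (is_A3 C f \<and> is_A4 C f)" "\<not> (is_A3 C f \<and> is_B5 C f)"
  "\<not> (is_A3 C f \<and> is_A5 C f)" "\<not> (is_B4 C f \<and> is_A4 C f)" "\<not> (is_B4 C f \<and> is_B5 C f)"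
  "\<not> (is_B4 C f \<and> is_A5 C f)" "\<not> (is_A4 C f \<and> is_B5 C f)" "\<not> (is_A4 C f \<and> is_A5 C f)"
  "\<not> (is_B5 C f \<and> is_A5 C f)"
  "\<not> (is_A3 C f \<and> is_L C f)" "\<not> (is_B4 C f \<and> is_L C f)" "\<not> (is_A4 C f \<and> is_L C f)"
  "\<not> (is_B5 C f \<and> is_L C f)" "\<not> (is_A5 C f \<and> is_L C f)"
  by (auto simp: is_A3_def is_A4_def is_A5_def is_B4_def is_B5_def is_L_def cell_size_def
      Diff_eq_empty_iff[THEN iffD2])

context
  fixes D :: "'d set" and al sg :: "'d \<Rightarrow> 'd" and C :: "'d set"
  assumes cd: "connected_drawing D al sg C"
begin

lemma SL_sub: "SL D al sg C T \<subseteq> Inn D al C" unfolding SL_def by blast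

lemma Inn_fin: "finite (Inn D al C)" unfolding Inn_def using finD[OF cd] by simp

lemma SL_fin: "finite (SL D al sg C T)" using SL_sub Inn_fin finite_subset by blast

lemma card_SL_or: "(\<And>f. \<not> (T f \<and> T' f)) \<Longrightarrow>
   card (SL D al sg C (\<lambda>f. T f \<or> T' f)) = card (SL D al sg C T) + card (SL D al sg C T')"
proof -
  assume ex: "\<And>f. \<not> (T f \<and> T' f)"
  have "SL D al sg C (\<lambda>f. T f \<or> T' f) = SL D al sg C T \<union> SL D al sg C T'"
    unfolding SL_def by blast
  moreover have "SL D al sg C T \<inter> SL D al sg C T' = {}" unfolding SL_def using ex by blast
  ultimately show ?thesis using SL_fin card_Un_disjoint by metis
qed

lemma Fend_TX_sub: "Fend al sg C ` TX D al sg C X \<subseteq> SL D al sg C (is_L C)"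
  using Fend_in[OF cd] unfolding TX_def by blast

lemma tau_le: "tau D al sg C X (is_L C) \<le> card (Fend al sg C ` TX D al sg C X)"
proof -
  let ?T = "TX D al sg C X"
  let ?P = "\<lambda>cs::'d set list. {cs, rev cs}"
  let ?F = "Fend al sg C"
  define h where "h y = ?P (SOME cs. cs \<in> ?T \<and> ?F cs = y)" for y
  have sub: "?P ` ?T \<subseteq> h ` (?F ` ?T)"
  proof
    fix z assume "z \<in> ?P ` ?T"
    then obtain cs where cs: "cs \<in> ?T" "z = ?P cs" by blast
    have ex: "\<exists>c. c \<in> ?T \<and> ?F c = ?F cs" using cs by blast
    define c0 where "c0 = (SOME c. c \<in> ?T \<and> ?F c = ?F cs)"
    have c0: "c0 \<in> ?T" "?F c0 = ?F cs" using someI_ex[OF ex] unfolding c0_def by auto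
    have "c0 = cs \<or> c0 = rev cs"
    proof -
      have "is_trail D al sg C cs" "is_trail D al sg C c0" using cs(1) c0(1) unfolding TX_def by auto
      then show ?thesis using Fend_inj[OF cd _ _ c0(2)[symmetric]] by blast
    qed
    then have "?P c0 = ?P cs" by auto
    moreover have "h (?F cs) = ?P c0" unfolding h_def c0_def by (rule refl)
    ultimately have "h (?F cs) = z" using cs(2) by simp
    then show "z \<in> h ` (?F ` ?T)" using cs by blast
  qed
  have fF: "finite (?F ` ?T)" by (rule finite_subset[OF Fend_TX_sub SL_fin])
  moreover have "finite (h ` (?F ` ?T))" using fF by (rule finite_imageI)
  ultimately have "card (?P ` ?T) \<le> card (h ` (?F ` ?T))" using card_mono sub by blast
  also have "\<dots> \<le> card (?F ` ?T)" by (rule card_image_le[OF fF])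
  finally show ?thesis unfolding tau_def TX_def by simp
qed

lemma Fend_disj:
  assumes xy: "\<And>f. \<not> (X f \<and> Y f)" and xl: "\<And>f. \<not> (X f \<and> is_L C f)" and yl: "\<And>f. \<not> (Y f \<and> is_L C f)"
  shows "Fend al sg C ` TX D al sg C X \<inter> Fend al sg C ` TX D al sg C Y = {}"
proof (rule ccontr)
  assume "Fend al sg C ` TX D al sg C X \<inter> Fend al sg C ` TX D al sg C Y \<noteq> {}"
  then obtain cs cs' where cs: "cs \<in> TX D al sg C X" "cs' \<in> TX D al sg C Y"
    and e: "Fend al sg C cs = Fend al sg C cs'" by blast
  have t: "is_trail D al sg C cs" "is_trail D al sg C cs'" using cs unfolding TX_def by auto
  have ne: "cs \<noteq> []" using t(1) unfolding is_trail_iff by auto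
  have "cs' = cs \<or> cs' = rev cs" using Fend_inj[OF cd t e] .
  then show False
  proof
    assume "cs' = cs"
    then show False using cs xy[of "hd cs"] xy[of "last cs"] xl[of "hd cs"] xl[of "last cs"]
        yl[of "hd cs"] yl[of "last cs"] unfolding TX_def by auto
  next
    assume r: "cs' = rev cs"
    have "hd cs' = last cs" "last cs' = hd cs" using r ne by (simp_all add: hd_rev last_rev)
    then show False using cs xy[of "hd cs"] xy[of "last cs"] xl[of "hd cs"] xl[of "last cs"]
        yl[of "hd cs"] yl[of "last cs"] unfolding TX_def by auto
  qed
qed

end


theorem mainTheorem6:
  fixes D :: "'d set" and al sg :: "'d \<Rightarrow> 'd" and C :: "'d set"
  assumes "connected_drawing D al sg C"
    and "three_plane D al sg C"
  shows "2 * card (E_i D al sg C 2) + 4 * card (E_i D al sg C 3)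
     \<ge> 3 * N D al sg (is_A3 C) + N D al sg (is_B4 C) + 4 * N D al sg (is_A4 C)
       + 2 * N D al sg (is_B5 C) + 5 * N D al sg (is_A5 C)
       + tau D al sg C (is_B4 C) (is_L C) + tau D al sg C (is_B5 C) (is_L C)
       + tau D al sg C (is_A3 C) (is_L C) + tau D al sg C (is_A5 C) (is_L C)"
proof -
  note cd = assms(1)
  let ?S = "SL D al sg C"
  let ?I = "Inn D al C"
  have h1: "card ?I \<le> 2 * card (E_i D al sg C 2) + 4 * card (E_i D al sg C 3)"
    by (rule LHS_bound[OF cd assms(2)])
  have wA3: "3 * N D al sg (is_A3 C) \<le> card (?S (is_A3 C))"
    unfolding SL_def
    by (rule cells_weight[OF cd]) (use A_inner[OF cd] in \<open>auto simp: is_A3_def\<close>)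
  have wA4: "4 * N D al sg (is_A4 C) \<le> card (?S (is_A4 C))"
    unfolding SL_def
    by (rule cells_weight[OF cd]) (use A_inner[OF cd] in \<open>auto simp: is_A4_def\<close>)
  have wA5: "5 * N D al sg (is_A5 C) \<le> card (?S (is_A5 C))"
    unfolding SL_def
    by (rule cells_weight[OF cd]) (use A_inner[OF cd] in \<open>auto simp: is_A5_def\<close>)
  have wB4: "1 * N D al sg (is_B4 C) \<le> card (?S (is_B4 C))"
    unfolding SL_def
    by (rule cells_weight[OF cd]) (use B_inner[OF cd] in \<open>fastforce simp: is_B4_def\<close>)
  have wB5: "2 * N D al sg (is_B5 C) \<le> card (?S (is_B5 C))"
    unfolding SL_def
    by (rule cells_weight[OF cd]) (use B_inner[OF cd] in \<open>fastforce simp: is_B5_def\<close>)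
  let ?G = "\<lambda>X. Fend al sg C ` TX D al sg C X"
  have t1: "tau D al sg C (is_B4 C) (is_L C) \<le> card (?G (is_B4 C))" by (rule tau_le[OF cd])
  have t2: "tau D al sg C (is_B5 C) (is_L C) \<le> card (?G (is_B5 C))" by (rule tau_le[OF cd])
  have t3: "tau D al sg C (is_A3 C) (is_L C) \<le> card (?G (is_A3 C))" by (rule tau_le[OF cd])
  have t4: "tau D al sg C (is_A5 C) (is_L C) \<le> card (?G (is_A5 C))" by (rule tau_le[OF cd])
  have fG: "\<And>X. finite (?G X)" using Fend_TX_sub[OF cd] SL_fin[OF cd] by (meson finite_subset)
  have d12: "?G (is_A3 C) \<inter> ?G (is_B4 C) = {}" by (rule Fend_disj[OF cd excl(1) excl(11) excl(12)])
  have d13: "?G (is_A3 C) \<inter> ?G (is_B5 C) = {}" by (rule Fend_disj[OF cd excl(3) excl(11) excl(14)])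
  have d14: "?G (is_A3 C) \<inter> ?G (is_A5 C) = {}" by (rule Fend_disj[OF cd excl(4) excl(11) excl(15)])
  have d23: "?G (is_B4 C) \<inter> ?G (is_B5 C) = {}" by (rule Fend_disj[OF cd excl(6) excl(12) excl(14)])
  have d24: "?G (is_B4 C) \<inter> ?G (is_A5 C) = {}" by (rule Fend_disj[OF cd excl(7) excl(12) excl(15)])
  have d34: "?G (is_B5 C) \<inter> ?G (is_A5 C) = {}" by (rule Fend_disj[OF cd excl(10) excl(14) excl(15)])
  have u1: "card (?G (is_A3 C) \<union> ?G (is_B4 C)) = card (?G (is_A3 C)) + card (?G (is_B4 C))"
    using card_Un_disjoint[OF fG fG d12] .
  have u2: "card ((?G (is_A3 C) \<union> ?G (is_B4 C)) \<union> ?G (is_B5 C)) =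
      card (?G (is_A3 C) \<union> ?G (is_B4 C)) + card (?G (is_B5 C))"
  proof (rule card_Un_disjoint)
    show "finite (?G (is_A3 C) \<union> ?G (is_B4 C))" by (simp add: fG)
    show "finite (?G (is_B5 C))" by (rule fG)
    show "(?G (is_A3 C) \<union> ?G (is_B4 C)) \<inter> ?G (is_B5 C) = {}" by (simp only: Int_Un_distrib2 d13 d23 Un_empty)
  qed
  have u3: "card (((?G (is_A3 C) \<union> ?G (is_B4 C)) \<union> ?G (is_B5 C)) \<union> ?G (is_A5 C)) =
      card ((?G (is_A3 C) \<union> ?G (is_B4 C)) \<union> ?G (is_B5 C)) + card (?G (is_A5 C))"
  proof (rule card_Un_disjoint)
    show "finite ((?G (is_A3 C) \<union> ?G (is_B4 C)) \<union> ?G (is_B5 C))" by (simp add: fG)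
    show "finite (?G (is_A5 C))" by (rule fG)
    show "((?G (is_A3 C) \<union> ?G (is_B4 C)) \<union> ?G (is_B5 C)) \<inter> ?G (is_A5 C) = {}" by (simp only: Int_Un_distrib2 d14 d24 d34 Un_empty)
  qed
  have u4: "card (((?G (is_A3 C) \<union> ?G (is_B4 C)) \<union> ?G (is_B5 C)) \<union> ?G (is_A5 C)) \<le> card (?S (is_L C))"
  proof (rule card_mono[OF SL_fin[OF cd]])
    show "((?G (is_A3 C) \<union> ?G (is_B4 C)) \<union> ?G (is_B5 C)) \<union> ?G (is_A5 C) \<subseteq> ?S (is_L C)"
      by (intro Un_least Fend_TX_sub[OF cd])
  qed
  have taus: "tau D al sg C (is_B4 C) (is_L C) + tau D al sg C (is_B5 C) (is_L C)
       + tau D al sg C (is_A3 C) (is_L C) + tau D al sg C (is_A5 C) (is_L C) \<le> card (?S (is_L C))"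
    using t1 t2 t3 t4 u1 u2 u3 u4 by linarith
  let ?T1 = "\<lambda>f. is_A3 C f \<or> is_B4 C f"
  let ?T2 = "\<lambda>f. ?T1 f \<or> is_A4 C f"
  let ?T3 = "\<lambda>f. ?T2 f \<or> is_B5 C f"
  let ?T4 = "\<lambda>f. ?T3 f \<or> is_A5 C f"
  let ?T5 = "\<lambda>f. ?T4 f \<or> is_L C f"
  have c1: "card (?S ?T1) = card (?S (is_A3 C)) + card (?S (is_B4 C))"
    by (rule card_SL_or[OF cd excl(1)])
  have c2: "card (?S ?T2) = card (?S ?T1) + card (?S (is_A4 C))"
    by (rule card_SL_or[OF cd]) (use excl(2,5) in blast)
  have c3: "card (?S ?T3) = card (?S ?T2) + card (?S (is_B5 C))"
    by (rule card_SL_or[OF cd]) (use excl(3,6,8) in blast)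
  have c4: "card (?S ?T4) = card (?S ?T3) + card (?S (is_A5 C))"
    by (rule card_SL_or[OF cd]) (use excl(4,7,9,10) in blast)
  have c5: "card (?S ?T5) = card (?S ?T4) + card (?S (is_L C))"
    by (rule card_SL_or[OF cd]) (use excl(11-15) in blast)
  have c6: "card (?S ?T5) \<le> card ?I" by (rule card_mono[OF Inn_fin[OF cd] SL_sub[OF cd]])
  show ?thesis using h1 wA3 wA4 wA5 wB4 wB5 taus c1 c2 c3 c4 c5 c6 by linarith
qed



end
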